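(* For every real $p\geq 0$ and every integer $n\geq 2$, $$\sum_{k=1}^{n-1}\frac{B_{2k}\bar B_{2n-2k}}{(2k)(2n-2k)}\,\frac{\Gamma(2k+p)\Gamma(2n-2k+p)}{\Gamma(2k)\Gamma(2n-2k)}=2\Gamma(p+1)\sum_{k=1}^{n}\frac{B_{2k}B_{2n-2k}}{(2k)!\,(2n-2k)!}\,\frac{1-2^{2k-1}}{2^{2n-1}}\,\frac{\Gamma(2k+p)\Gamma(2n+2p)}{\Gamma(2p+2k+1)}+\frac{B_{2n}\Gamma(2n+2p)}{(2n)!\,2^{2n-1}}\sum_{k=1}^{2n-1}\beta(p+k,p+1).$$
   Context: $B_n$ denotes the Bernoulli numbers, defined by $\frac{x}{e^x-1}=\sum_{n\ge 0}B_n\frac{x^n}{n!}$ (so $B_0=1$). $\bar B_n:=\frac{1-2^{n-1}}{2^{n-1}}B_n$. $\Gamma$ is the Gamma function and $\beta(a,b)=\frac{\Gamma(a)\Gamma(b)}{\Gamma(a+b)}$ is the Euler beta function. *)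

theory Defs
  imports "HOL-Analysis.Analysis" "HOL-Computational_Algebra.Formal_Power_Series"
begin

text \<open>Bernoulli numbers via the generating function x/(e^x-1) = sum B_n x^n/n!,
  realised as the formal power series inverse of (e^x-1)/x = sum x^n/(n+1)!.\<close>
definition bernoulli :: "nat \<Rightarrow> real" where
  "bernoulli n = fact n * fps_nth (inverse (Abs_fps (\<lambda>m. 1 / fact (Suc m) :: real))) n"

definition bernoulli_bar :: "nat \<Rightarrow> real" where
  "bernoulli_bar n = (1 - 2 powi (int n - 1)) / 2 powi (int n - 1) * bernoulli n"

end

theory Submission imports Defs begin
unbundle no vec_syntax
notation fps_nth (infixl \<open>$\<close> 75)

definition sc :: "real \<Rightarrow> real fps \<Rightarrow> real fps" where
  "sc c f = Abs_fps (\<lambda>m. c^m * f $ m)"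

lemma sc_nth[simp]: "sc c f $ m = c^m * f $ m" by (simp add: sc_def)

lemma sc_mult: "sc c (f*g) = sc c f * sc c g"
proof (rule fps_ext)
  fix n
  have "sc c (f*g) $ n = (\<Sum>i=0..n. c^i * f $ i * (c^(n-i) * g $ (n-i)))"
    unfolding sc_nth fps_mult_nth sum_distrib_left
    by (rule sum.cong) (auto simp: power_add[symmetric] mult_ac)
  then show "sc c (f*g) $ n = (sc c f * sc c g) $ n" by (simp add: fps_mult_nth)
qed

lemma sc_add: "sc c (f+g) = sc c f + sc c g" by (rule fps_ext) (simp add: algebra_simps)
lemma sc_diff: "sc c (f-g) = sc c f - sc c g" by (rule fps_ext) (simp add: algebra_simps)
lemma sc_const: "sc c (fps_const a) = fps_const a" by (rule fps_ext) simp
lemma sc_one: "sc c 1 = 1" by (rule fps_ext) simp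
lemma sc_X: "sc c fps_X = fps_const c * fps_X" by (rule fps_ext) (simp add: fps_X_def)
lemma sc_exp: "sc c (fps_exp a) = fps_exp (c*a)" by (rule fps_ext) (simp add: power_mult_distrib)

definition DD :: "real fps" where "DD = Abs_fps (\<lambda>m. 1 / fact (Suc m))"
definition Bg :: "real fps" where "Bg = inverse DD"
definition GG :: "real fps" where "GG = Bg + fps_const (1/2) * fps_X"
definition HH :: "real fps" where "HH = fps_const 2 * sc (1/2) Bg - Bg"

lemma DD0: "DD $ 0 = 1" by (simp add: DD_def)
lemma scDD0: "sc c DD $ 0 = 1" by (simp add: DD_def)
lemma scDD_nz: "sc c DD \<noteq> 0" using scDD0[of c] by (metis fps_zero_nth zero_neq_one)

lemma Bg_DD: "DD * Bg = 1" unfolding Bg_def by (rule inverse_mult_eq_1') (simp add: DD0)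

lemma X_DD: "fps_X * DD = fps_exp 1 - 1"
proof (rule fps_ext)
  fix n show "(fps_X * DD) $ n = (fps_exp 1 - 1) $ n"
    by (cases n) (simp_all add: DD_def algebra_simps)
qed

lemma X_scDD: "fps_const c * fps_X * sc c DD = fps_exp c - 1"
proof -
  have "sc c (fps_X * DD) = sc c (fps_exp 1 - 1)" by (simp add: X_DD)
  then show ?thesis by (simp add: sc_mult sc_X sc_diff sc_exp sc_one)
qed

lemma scBg_DD: "sc c DD * sc c Bg = 1"
  using arg_cong[OF Bg_DD, of "sc c"] by (simp add: sc_mult sc_one)

lemma GG_DD: "fps_const 2 * GG * DD = fps_exp 1 + 1"
proof -
  have "fps_const 2 * GG * DD = fps_const 2 * (DD * Bg) + fps_X * DD"
    unfolding GG_def by (simp add: algebra_simps fps_const_mult[symmetric])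
  also have "\<dots> = fps_exp 1 + 1" by (simp add: Bg_DD X_DD)
  finally show ?thesis .
qed

lemma fps_X_nz: "(fps_X :: real fps) \<noteq> 0" by simp

lemma DD_half: "DD = fps_const (1/2) * sc (1/2) DD * (fps_exp (1/2) + 1)"
proof -
  have e: "fps_exp (1::real) = fps_exp (1/2) * fps_exp (1/2)"
    by (simp flip: fps_exp_add_mult)
  have h: "fps_const (1/2) * fps_X * sc (1/2) DD = fps_exp (1/2) - 1" by (rule X_scDD)
  have "fps_X * DD = fps_X * (fps_const (1/2) * sc (1/2) DD * (fps_exp (1/2) + 1))"
    unfolding X_DD e
    using h by (metis (no_types, lifting) mult.commute mult.left_commute square_diff_one_factored)
  then show ?thesis using fps_X_nz by simp
qed

lemma DD_HH: "DD * HH = fps_exp (1/2)"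
proof -
  have "DD * HH = fps_const 2 * (DD * sc (1/2) Bg) - DD * Bg" unfolding HH_def by (simp add: algebra_simps)
  also have "DD * sc (1/2) Bg = fps_const (1/2) * (sc (1/2) DD * sc (1/2) Bg) * (fps_exp (1/2) + 1)"
    by (subst DD_half) (simp add: mult_ac)
  also have "\<dots> = fps_const (1/2) * (fps_exp (1/2) + 1)" by (simp add: scBg_DD)
  finally have "DD * HH = fps_const 2 * (fps_const (1/2) * (fps_exp (1/2) + 1)) - 1" by (simp add: Bg_DD)
  also have "\<dots> = (fps_const 2 * fps_const (1/2)) * (fps_exp (1/2) + 1) - 1" by (simp only: mult.assoc)
  also have "fps_const 2 * fps_const (1/2) = (1::real fps)" by (simp add: fps_const_mult)
  finally show ?thesis by simp
qed

lemma sc_GG_DD: "fps_const 2 * sc c GG * sc c DD = fps_exp c + 1"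
  using arg_cong[OF GG_DD, of "sc c"] by (simp add: sc_mult sc_const sc_add sc_exp sc_one)

lemma sc_HH_DD: "sc c DD * sc c HH = fps_exp (c/2)"
  using arg_cong[OF DD_HH, of "sc c"] by (simp add: sc_mult sc_exp)

lemma GG_even: "sc (-1) GG = GG"
proof -
  define D' where "D' = sc (-1) DD"
  define G' where "G' = sc (-1) GG"
  define E where "E = fps_exp (1::real)"
  define E' where "E' = fps_exp (-1::real)"
  have h1: "fps_const 2 * G' * D' = E' + 1" unfolding G'_def D'_def E'_def by (rule sc_GG_DD)
  have h2: "fps_const (-1) * fps_X * D' = E' - 1" unfolding D'_def E'_def by (rule X_scDD)
  have h3: "E' * E = 1" unfolding E_def E'_def by (simp flip: fps_exp_add_mult)
  have h4: "fps_X * DD = E - 1" unfolding E_def by (rule X_DD)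
  have h5: "fps_const (-1) = (-1 :: real fps)" by simp
  have "fps_X * (D' * E) = fps_X * DD"
    using h2 h3 h4 h5 by algebra
  then have h6: "D' * E = DD" using fps_X_nz by simp
  have "(fps_const 2 * DD) * G' = (fps_const 2 * DD) * GG"
    using h1 h3 h6 GG_DD[folded E_def] by algebra
  moreover have "fps_const 2 * DD \<noteq> 0" 
  proof
    assume "fps_const 2 * DD = 0"
    then have "(fps_const 2 * DD) $ 0 = 0" by simp
    then show False using DD0 by simp
  qed
  ultimately show ?thesis unfolding G'_def by simp
qed

definition bb :: "nat \<Rightarrow> real" where "bb m = Bg $ m"

lemma bernoulli_bb: "bernoulli m = fact m * bb m"
  by (simp add: bernoulli_def bb_def Bg_def DD_def)

lemma GG_nth: "GG $ m = bb m + (if m = 1 then 1/2 else 0)"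
  by (simp add: GG_def bb_def)

lemma GG_odd: assumes "odd m" shows "GG $ m = 0"
proof -
  have "sc (-1) GG $ m = GG $ m" by (simp add: GG_even)
  then have "- (GG $ m) = GG $ m" using assms by simp
  then show ?thesis by simp
qed

lemma bb_odd: assumes "odd m" "m \<noteq> 1" shows "bb m = 0"
  using GG_odd[OF assms(1)] assms(2) by (simp add: GG_nth)

lemma bb_0: "bb 0 = 1" by (simp add: bb_def Bg_def DD0)

lemma HH_nth: "HH $ m = (2 / 2^m - 1) * bb m"
  by (simp add: HH_def bb_def algebra_simps power_divide)

lemma HH_odd: assumes "odd m" shows "HH $ m = 0"
  using assms bb_odd[of m] by (cases "m = 1") (auto simp: HH_nth)

lemma main_fps:
  fixes t s :: real assumes ts: "t + s = 1"
  shows "sc t GG * sc s HH + sc s GG * sc t HH =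
         fps_const 2 * sc (1/2) GG * (fps_const t * sc s HH + fps_const s * sc t HH)"
proof -
  define u where "u = fps_exp (t/2)"
  define v where "v = fps_exp (s/2)"
  have et: "fps_exp t = u * u" unfolding u_def by (simp flip: fps_exp_add_mult)
  have es: "fps_exp s = v * v" unfolding v_def by (simp flip: fps_exp_add_mult)
  have eh: "fps_exp (1/2) = u * v" unfolding u_def v_def using ts
    by (simp flip: fps_exp_add_mult add: add_divide_distrib[symmetric])
  have gt: "fps_const 2 * sc t GG * sc t DD = u * u + 1" using sc_GG_DD[of t] et by simp
  have gs: "fps_const 2 * sc s GG * sc s DD = v * v + 1" using sc_GG_DD[of s] es by simp
  have gh: "fps_const 2 * sc (1/2) GG * sc (1/2) DD = u * v + 1" using sc_GG_DD[of "1/2"] eh by simp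
  have ht: "sc t DD * sc t HH = u" using sc_HH_DD[of t] u_def by simp
  have hs: "sc s DD * sc s HH = v" using sc_HH_DD[of s] v_def by simp
  have xt: "fps_const t * fps_X * sc t DD = u * u - 1" using X_scDD[of t] et by simp
  have xs: "fps_const s * fps_X * sc s DD = v * v - 1" using X_scDD[of s] es by simp
  have xh: "fps_const (1/2) * fps_X * sc (1/2) DD = u * v - 1" using X_scDD[of "1/2"] eh by simp
  have c2: "fps_const 2 * fps_const (1/2) = (1::real fps)" by (simp add: fps_const_mult)
  define M where "M = fps_const 2 * fps_X * sc t DD * sc s DD * sc (1/2) DD"
  have "M * (sc t GG * sc s HH + sc s GG * sc t HH) =
        M * (fps_const 2 * sc (1/2) GG * (fps_const t * sc s HH + fps_const s * sc t HH))"
    unfolding M_def using gt gs gh ht hs xt xs xh c2 by algebra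
  moreover have "M \<noteq> 0" unfolding M_def using scDD_nz fps_X_nz
    by (simp add: fps_const_eq_0_iff)
  ultimately show ?thesis by simp
qed

lemma sum_even_odd: "(\<Sum>i=0..2*(n::nat). f i) = (\<Sum>k=0..n. f (2*k)) + (\<Sum>k<n. f (2*k+1))"
proof (induction n)
  case 0 then show ?case by simp
next
  case (Suc n)
  have e: "2 * Suc n = Suc (Suc (2*n))" by simp
  show ?case unfolding e using Suc by (simp add: sum.atLeast0_atMost_Suc add_ac)
qed

definition cc :: "nat \<Rightarrow> real" where "cc m = (2 / 2^m - 1) * bb m"

lemma cc_odd: "odd m \<Longrightarrow> cc m = 0" using HH_odd HH_nth cc_def by simp
lemma cc_0: "cc 0 = 1" by (simp add: cc_def bb_0)

lemma poly1:
  fixes t :: real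
  defines "s \<equiv> 1 - t"
  shows "(\<Sum>k=0..n. bb (2*k) * cc (2*n-2*k) * (t^(2*k)* s^(2*n-2*k) + s^(2*k)*t^(2*n-2*k)))
       = 2 * (\<Sum>k=0..n. bb (2*k) / 2^(2*k) * cc (2*n-2*k) * (t* s^(2*n-2*k) + s*t^(2*n-2*k)))"
proof -
  have ts: "t + s = 1" by (simp add: s_def)
  have "(sc t GG * sc s HH + sc s GG * sc t HH) $ (2*n) =
        (fps_const 2 * sc (1/2) GG * (fps_const t * sc s HH + fps_const s * sc t HH)) $ (2*n)"
    by (simp only: main_fps[OF ts])
  moreover have "(sc t GG * sc s HH + sc s GG * sc t HH) $ (2*n) =
     (\<Sum>i=0..2*n. GG$i * HH$(2*n-i) * (t^i* s^(2*n-i) + s^i*t^(2*n-i)))"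
    unfolding fps_add_nth fps_mult_nth sum.distrib[symmetric]
    by (rule sum.cong) (simp_all add: algebra_simps)
  moreover have "(fps_const 2 * sc (1/2) GG * (fps_const t * sc s HH + fps_const s * sc t HH)) $ (2*n)
     = 2 * (\<Sum>i=0..2*n. (1/2)^i * GG$i * HH$(2*n-i) * (t* s^(2*n-i) + s*t^(2*n-i)))"
    unfolding mult.assoc fps_mult_left_const_nth
    apply (subst fps_mult_nth)
    apply (simp only: fps_add_nth fps_mult_left_const_nth sc_nth)
    by (simp add: algebra_simps sum_distrib_left)
  ultimately have E: "(\<Sum>i=0..2*n. GG$i * HH$(2*n-i) * (t^i* s^(2*n-i) + s^i*t^(2*n-i)))
      = 2 * (\<Sum>i=0..2*n. (1/2)^i * GG$i * HH$(2*n-i) * (t* s^(2*n-i) + s*t^(2*n-i)))"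
    by simp
  have odd1: "(\<Sum>k<n. (\<lambda>i. GG$i * HH$(2*n-i) * (t^i* s^(2*n-i) + s^i*t^(2*n-i))) (2*k+1)) = 0"
    by (rule sum.neutral) (auto intro!: HH_odd)
  have odd2: "(\<Sum>k<n. (\<lambda>i. (1/2)^i * GG$i * HH$(2*n-i) * (t* s^(2*n-i) + s*t^(2*n-i))) (2*k+1)) = 0"
    by (rule sum.neutral) (auto intro!: HH_odd)
  have ev: "\<And>k. GG$(2*k) = bb (2*k)" by (simp add: GG_nth)
  have ev2: "\<And>k. HH$(2*n-2*k) = cc (2*n-2*k)" by (simp add: HH_nth cc_def)
  from E show ?thesis
    unfolding sum_even_odd[of _ n] odd1 odd2
    by (simp add: ev ev2 power_mult power_divide)
qed

lemma sum_ends: assumes "(n::nat) \<ge> 1"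
  shows "(\<Sum>k=0..n. f k) = f 0 + (\<Sum>k=1..n-1. f k) + (f n :: real)"
proof -
  obtain m where n: "n = Suc m" using assms by (cases n) auto
  show ?thesis unfolding n
    by (simp add: sum.atLeast_Suc_atMost[of 0] sum.cl_ivl_Suc)
qed

lemma geom: "(\<Sum>j=1..m. t^j * (1 - t)) = t - (t::real)^(m+1)"
  by (induction m) (simp_all add: algebra_simps)

lemma poly2:
  fixes t :: real
  defines "s \<equiv> 1 - t"
  assumes n: "n \<ge> 1"
  shows "(\<Sum>k=1..n-1. bb (2*k) * cc (2*n-2*k) * (t^(2*k) * s^(2*n-2*k) + s^(2*k) * t^(2*n-2*k)))
       = (\<Sum>k=1..n. 2 * cc (2*k) * bb (2*n-2*k) / 2^(2*n-2*k) * (t * s^(2*k) + s * t^(2*k)))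
         + 2 * bb (2*n) / 2^(2*n) * (\<Sum>j=1..2*n-1. t^j * s + s^j * t)"
proof -
  let ?f = "\<lambda>k. bb (2*k) * cc (2*n-2*k) * (t^(2*k) * s^(2*n-2*k) + s^(2*k) * t^(2*n-2*k))"
  let ?g = "\<lambda>k. bb (2*k) / 2^(2*k) * cc (2*n-2*k) * (t * s^(2*n-2*k) + s * t^(2*n-2*k))"
  let ?h = "\<lambda>k. cc (2*k) * bb (2*n-2*k) / 2^(2*n-2*k) * (t * s^(2*k) + s * t^(2*k))"
  have P: "(\<Sum>k=0..n. ?f k) = 2 * (\<Sum>k=0..n. ?g k)" using poly1[of n t] unfolding s_def by simp
  have R: "(\<Sum>k=0..n. ?g k) = (\<Sum>k=0..n. ?h k)"
    apply (subst sum.atLeastAtMost_rev)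
    apply (rule sum.cong)
     apply simp
    subgoal for x
      proof -
        assume "x \<in> {0..n}"
        then have a: "2*n - 2*(n-x) = 2*x" and b: "2*(n-x) = 2*n-2*x" and c: "2*n - (2*n-2*x) = 2*x" and d: "n*2 - (n*2-x*2) = x*2" by auto
        show ?thesis unfolding a b c by (simp add: algebra_simps d)
      qed
    done
  have R2: "(\<Sum>k=0..n. ?h k) = ?h 0 + (\<Sum>k=1..n. ?h k)"
    by (simp add: sum.atLeast_Suc_atMost[of 0])
  have f0: "?f 0 = cc (2*n) * (s^(2*n) + t^(2*n))" by (simp add: bb_0 add_ac)
  have fn: "?f n = bb (2*n) * (t^(2*n) + s^(2*n))" by (simp add: cc_0)
  have h0: "?h 0 = bb (2*n) / 2^(2*n) * (t + s)" by (simp add: cc_0)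
  have ccn: "cc (2*n) = (2 / 2^(2*n) - 1) * bb (2*n)" by (simp add: cc_def)
  have G1: "(\<Sum>j=1..2*n-1. t^j * s) = t - t^(2*n)"
    using geom[of t "2*n-1"] n unfolding s_def by simp
  have G2: "(\<Sum>j=1..2*n-1. s^j * t) = s - s^(2*n)"
    using geom[of s "2*n-1"] n unfolding s_def by simp
  have ts: "t + s = 1" by (simp add: s_def)
  have "(\<Sum>k=1..n-1. ?f k) = 2 * ((\<Sum>k=1..n. ?h k) + ?h 0) - ?f 0 - ?f n"
    using P R R2 sum_ends[OF n, of ?f] by simp
  also have "\<dots> = 2 * (\<Sum>k=1..n. ?h k) + 2 * bb (2*n) / 2^(2*n) * ((t - t^(2*n)) + (s - s^(2*n)))"
    unfolding f0 fn h0 ccn using ts by (simp add: field_simps)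
  also have "\<dots> = (\<Sum>k=1..n. 2 * ?h k) + 2 * bb (2*n) / 2^(2*n) * (\<Sum>j=1..2*n-1. t^j * s + s^j * t)"
    unfolding G1[symmetric] G2[symmetric] sum.distrib sum_distrib_left by simp
  finally show ?thesis by (simp add: mult_ac)
qed

definition wt :: "real \<Rightarrow> real \<Rightarrow> real" where
  "wt p t = t powr (p-1) * (1-t) powr (p-1)"

lemma beta_int:
  assumes p: "p \<ge> 0" and i: "i \<ge> 1" and j: "j \<ge> 1"
  shows "((\<lambda>t. t^i * (1-t)^j * wt p t) has_integral Beta (p + real i) (p + real j)) {0<..<1}"
proof -
  have "((\<lambda>t. t powr (p + real i - 1) * (1 - t) powr (p + real j - 1)) has_integral Beta (p + real i) (p + real j)) {0..1}"
    using has_integral_Beta_real[of "p + real i" "p + real j"] p i j by simp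
  then have I: "((\<lambda>t. t powr (p + real i - 1) * (1 - t) powr (p + real j - 1)) has_integral Beta (p + real i) (p + real j)) {0<..<1}"
    by (simp add: has_integral_Icc_iff_Ioo)
  show ?thesis
  proof (subst has_integral_cong)
    fix t :: real assume t: "t \<in> {0<..<1}"
    have a: "t powr (p + real i - 1) = t powr (p - 1) * t ^ i"
    proof -
      have e: "p + real i - 1 = (p - 1) + real i" by simp
      have pos: "t > 0" using t by simp
      show ?thesis unfolding e powr_add using powr_realpow[OF pos, of i] by simp
    qed
    have b: "(1-t) powr (p + real j - 1) = (1-t) powr (p - 1) * (1-t) ^ j"
    proof -
      have e: "p + real j - 1 = (p - 1) + real j" by simp
      have pos: "(1-t) > 0" using t by simp
      show ?thesis unfolding e powr_add using powr_realpow[OF pos, of j] by simp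
    qed
    show "t^i * (1-t)^j * wt p t = t powr (p + real i - 1) * (1 - t) powr (p + real j - 1)"
      unfolding a b wt_def by (simp add: mult_ac)
  next
    show "((\<lambda>t. t powr (p + real i - 1) * (1 - t) powr (p + real j - 1)) has_integral Beta (p + real i) (p + real j)) {0<..<1}"
      by (rule I)
  qed
qed

lemma beta_pair:
  assumes p: "p \<ge> 0" and i: "i \<ge> 1" and j: "j \<ge> 1"
  shows "((\<lambda>t. (t^i * (1-t)^j + (1-t)^i * t^j) * wt p t) has_integral 2 * Beta (p + real i) (p + real j)) {0<..<1}"
proof -
  have "((\<lambda>t. t^i * (1-t)^j * wt p t + t^j * (1-t)^i * wt p t) has_integral
         (Beta (p + real i) (p + real j) + Beta (p + real j) (p + real i))) {0<..<1}"
    by (intro has_integral_add beta_int assms)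
  then show ?thesis by (simp add: Beta_commute algebra_simps)
qed

lemma beta_identity:
  assumes p: "p \<ge> 0" and n: "n \<ge> 1"
  shows "(\<Sum>k=1..n-1. bb (2*k) * cc (2*n-2*k) * Beta (p + real (2*k)) (p + real (2*n-2*k)))
       = (\<Sum>k=1..n. 2 * cc (2*k) * bb (2*n-2*k) / 2^(2*n-2*k) * Beta (p + 1) (p + real (2*k)))
         + 2 * bb (2*n) / 2^(2*n) * (\<Sum>j=1..2*n-1. Beta (p + real j) (p + 1))"
proof -
  let ?P = "\<lambda>i j t. (t^i * (1-t)^j + (1-t)^i * t^j) * wt p t"
  have L: "((\<lambda>t. \<Sum>k=1..n-1. bb (2*k) * cc (2*n-2*k) * ?P (2*k) (2*n-2*k) t) has_integral
      (\<Sum>k=1..n-1. bb (2*k) * cc (2*n-2*k) * (2 * Beta (p + real (2*k)) (p + real (2*n-2*k))))) {0<..<1}"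
    by (intro has_integral_sum has_integral_mult_right beta_pair p) auto
  have R1: "((\<lambda>t. \<Sum>k=1..n. 2 * cc (2*k) * bb (2*n-2*k) / 2^(2*n-2*k) * ?P 1 (2*k) t) has_integral
      (\<Sum>k=1..n. 2 * cc (2*k) * bb (2*n-2*k) / 2^(2*n-2*k) * (2 * Beta (p + real 1) (p + real (2*k))))) {0<..<1}"
    by (intro has_integral_sum has_integral_mult_right beta_pair p) auto
  have R2: "((\<lambda>t. 2 * bb (2*n) / 2^(2*n) * (\<Sum>j=1..2*n-1. ?P j 1 t)) has_integral
      (2 * bb (2*n) / 2^(2*n) * (\<Sum>j=1..2*n-1. 2 * Beta (p + real j) (p + real 1)))) {0<..<1}"
    by (intro has_integral_sum has_integral_mult_right beta_pair p) auto
  have R: "((\<lambda>t. (\<Sum>k=1..n. 2 * cc (2*k) * bb (2*n-2*k) / 2^(2*n-2*k) * ?P 1 (2*k) t) +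
                2 * bb (2*n) / 2^(2*n) * (\<Sum>j=1..2*n-1. ?P j 1 t)) has_integral
      ((\<Sum>k=1..n. 2 * cc (2*k) * bb (2*n-2*k) / 2^(2*n-2*k) * (2 * Beta (p + real 1) (p + real (2*k)))) +
       2 * bb (2*n) / 2^(2*n) * (\<Sum>j=1..2*n-1. 2 * Beta (p + real j) (p + real 1)))) {0<..<1}"
    by (rule has_integral_add[OF R1 R2])
  have eq: "(\<Sum>k=1..n-1. bb (2*k) * cc (2*n-2*k) * ?P (2*k) (2*n-2*k) t) =
     (\<Sum>k=1..n. 2 * cc (2*k) * bb (2*n-2*k) / 2^(2*n-2*k) * ?P 1 (2*k) t) +
                2 * bb (2*n) / 2^(2*n) * (\<Sum>j=1..2*n-1. ?P j 1 t)" for t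
  proof -
    have "(\<Sum>k=1..n-1. bb (2*k) * cc (2*n-2*k) * ?P (2*k) (2*n-2*k) t) =
      (\<Sum>k=1..n-1. bb (2*k) * cc (2*n-2*k) * (t^(2*k) * (1-t)^(2*n-2*k) + (1-t)^(2*k) * t^(2*n-2*k))) * wt p t"
      unfolding sum_distrib_right by (simp add: mult_ac)
    also have "\<dots> = ((\<Sum>k=1..n. 2 * cc (2*k) * bb (2*n-2*k) / 2^(2*n-2*k) * (t * (1-t)^(2*k) + (1-t) * t^(2*k)))
         + 2 * bb (2*n) / 2^(2*n) * (\<Sum>j=1..2*n-1. t^j * (1-t) + (1-t)^j * t)) * wt p t"
      using poly2[OF n, of t] by simp
    also have "\<dots> = (\<Sum>k=1..n. 2 * cc (2*k) * bb (2*n-2*k) / 2^(2*n-2*k) * ?P 1 (2*k) t) +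
                2 * bb (2*n) / 2^(2*n) * (\<Sum>j=1..2*n-1. ?P j 1 t)"
      by (simp only: distrib_right sum_distrib_right mult.assoc power_one_right)
    finally show ?thesis .
  qed
  have "(\<Sum>k=1..n-1. bb (2*k) * cc (2*n-2*k) * (2 * Beta (p + real (2*k)) (p + real (2*n-2*k)))) =
     (\<Sum>k=1..n. 2 * cc (2*k) * bb (2*n-2*k) / 2^(2*n-2*k) * (2 * Beta (p + real 1) (p + real (2*k)))) +
       2 * bb (2*n) / 2^(2*n) * (\<Sum>j=1..2*n-1. 2 * Beta (p + real j) (p + real 1))"
    using has_integral_unique[OF L R[folded eq]] .
  then have "2 * (\<Sum>k=1..n-1. bb (2*k) * cc (2*n-2*k) * Beta (p + real (2*k)) (p + real (2*n-2*k))) =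
     2 * ((\<Sum>k=1..n. 2 * cc (2*k) * bb (2*n-2*k) / 2^(2*n-2*k) * Beta (p + 1) (p + real (2*k))) +
       2 * bb (2*n) / 2^(2*n) * (\<Sum>j=1..2*n-1. Beta (p + real j) (p + 1)))"
    by (simp add: sum_distrib_left algebra_simps)
  then show ?thesis by simp
qed




lemma bernoulli_bar_cc: "bernoulli_bar m = fact m * cc m"
proof -
  have "(2::real) powi (int m - 1) = 2^m / 2"
    by (simp add: power_int_diff)
  then show ?thesis unfolding bernoulli_bar_def cc_def bernoulli_bb
    by (simp add: field_simps)
qed

lemma Gamma_nat: "m \<ge> 1 \<Longrightarrow> Gamma (real m) = fact (m - 1)"
  using Gamma_fact[of "m - 1"] by (simp add: of_nat_diff)

lemma auxL:
  fixes a b c d x y B G :: real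
  assumes "a \<noteq> 0" "b \<noteq> 0" "c \<noteq> 0" "d \<noteq> 0"
  shows "(a*c)*x*((b*d)*y)/(a*b) * (B*G/(c*d)) = G*(x*y*B)"
  using assms by (simp add: field_simps)

lemma auxR:
  fixes a P x y g h G q :: real
  assumes "a \<noteq> 0" "P \<noteq> 0" "q \<noteq> 0"
  shows "2*g*(x*y*((1-a)/(P*a))*(h*G/q)) = G*(2*((2/(2*a) - 1)*x)*y/P*(g*h/q))"
  using assms by (simp add: field_simps)

lemma termL:
  assumes m1: "m1 \<ge> 1" and m2: "m2 \<ge> 1" and p: "p \<ge> 0"
  shows "fact m1 * x * (fact m2 * y) / (real m1 * real m2) *
           (Gamma (real m1 + p) * Gamma (real m2 + p) / (Gamma (real m1) * Gamma (real m2)))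
         = Gamma (real (m1+m2) + 2*p) * (x * y * Beta (p + real m1) (p + real m2))"
proof -
  have f1: "fact m1 = real m1 * fact (m1 - 1)" using m1 by (cases m1) auto
  have f2: "fact m2 = real m2 * fact (m2 - 1)" using m2 by (cases m2) auto
  have nz: "real m1 + p + (real m2 + p) \<notin> \<int>\<^sub>\<le>\<^sub>0"
  proof
    assume "real m1 + p + (real m2 + p) \<in> \<int>\<^sub>\<le>\<^sub>0"
    then have "real m1 + p + (real m2 + p) \<le> 0" by (rule nonpos_Ints_nonpos)
    then show False using m1 m2 p by simp
  qed
  have e: "real m1 + p + (real m2 + p) = real (m1+m2) + 2*p" by simp
  have GB: "Gamma (real m1 + p) * Gamma (real m2 + p) = Beta (p + real m1) (p + real m2) * Gamma (real (m1+m2) + 2*p)"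
    using Gamma_Gamma_Beta[OF nz] unfolding e by (simp add: add.commute)
  have pos1: "fact (m1 - 1) \<noteq> (0::real)" and pos2: "fact (m2 - 1) \<noteq> (0::real)" by auto
  show ?thesis
    unfolding Gamma_nat[OF m1] Gamma_nat[OF m2] GB f1 f2
    by (rule auxL) (use m1 m2 pos1 pos2 in auto)
qed

lemma termR:
  assumes k1: "k \<ge> 1" and kn: "k \<le> n" and p: "p \<ge> 0"
  shows "2 * Gamma (p + 1) * (fact (2*k) * x * (fact (2*n-2*k) * y) / (fact (2*k) * fact (2*n-2*k))
            * ((1 - 2 ^ (2*k-1)) / 2 ^ (2*n-1))
            * (Gamma (real (2*k) + p) * Gamma (real (2*n) + 2*p) / Gamma (2*p + real (2*k) + 1)))
       = Gamma (real (2*n) + 2*p) * (2 * ((2 / 2^(2*k) - 1) * x) * y / 2^(2*n-2*k) * Beta (p + 1) (p + real (2*k)))"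
proof -
  have a1: "p + 1 + (real (2*k) + p) = 2*p + real (2*k) + 1" by simp
  have a2: "p + real (2*k) = real (2*k) + p" by simp
  have B: "Beta (p + 1) (p + real (2*k)) = Gamma (p + 1) * Gamma (real (2*k) + p) / Gamma (2*p + real (2*k) + 1)"
    unfolding Beta_def a2 a1 ..
  have n1: "2*n-1 = (2*n-2*k) + (2*k-1)" using k1 kn by simp
  have e1: "(2::real)^(2*n-1) = 2^(2*n-2*k) * 2^(2*k-1)"
    unfolding n1 by (rule power_add)
  have n2: "2*k = Suc (2*k-1)" using k1 by simp
  have e2: "(2::real)^(2*k) = 2 * 2^(2*k-1)"
    by (subst n2) (rule power_Suc)
  have e3: "fact (2*k) * x * (fact (2*n-2*k) * y) / (fact (2*k) * fact (2*n-2*k)) = x * (y::real)"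
    by simp
  have q: "Gamma (2*p + real (2*k) + 1) \<noteq> 0"
  proof
    assume "Gamma (2*p + real (2*k) + 1) = 0"
    then have "2*p + real (2*k) + 1 \<in> \<int>\<^sub>\<le>\<^sub>0" by (simp add: Gamma_eq_zero_iff)
    then have "2*p + real (2*k) + 1 \<le> 0" by (rule nonpos_Ints_nonpos)
    then show False using p by simp
  qed
  show ?thesis unfolding B e1 e2 e3
    by (rule auxR) (use q in auto)
qed

theorem theorem4p3:
  fixes p :: real and n :: nat
  assumes "p \<ge> 0" and "n \<ge> 2"
  shows "(\<Sum>k=1..n-1. bernoulli (2*k) * bernoulli_bar (2*n-2*k) / (real (2*k) * real (2*n-2*k))
            * (Gamma (real (2*k) + p) * Gamma (real (2*n-2*k) + p) / (Gamma (real (2*k)) * Gamma (real (2*n-2*k)))))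
       = 2 * Gamma (p + 1) * (\<Sum>k=1..n. bernoulli (2*k) * bernoulli (2*n-2*k) / (fact (2*k) * fact (2*n-2*k))
            * ((1 - 2 ^ (2*k-1)) / 2 ^ (2*n-1))
            * (Gamma (real (2*k) + p) * Gamma (real (2*n) + 2*p) / Gamma (2*p + real (2*k) + 1)))
         + bernoulli (2*n) * Gamma (real (2*n) + 2*p) / (fact (2*n) * 2 ^ (2*n-1))
            * (\<Sum>k=1..2*n-1. Beta (p + real k) (p + 1))"
proof -
  have p: "p \<ge> 0" and n1: "n \<ge> 1" using assms by auto
  define G2 where "G2 = Gamma (real (2*n) + 2*p)"
  have L: "(\<Sum>k=1..n-1. bernoulli (2*k) * bernoulli_bar (2*n-2*k) / (real (2*k) * real (2*n-2*k))
            * (Gamma (real (2*k) + p) * Gamma (real (2*n-2*k) + p) / (Gamma (real (2*k)) * Gamma (real (2*n-2*k)))))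
      = G2 * (\<Sum>k=1..n-1. bb (2*k) * cc (2*n-2*k) * Beta (p + real (2*k)) (p + real (2*n-2*k)))"
    unfolding sum_distrib_left
  proof (rule sum.cong)
    fix k assume k: "k \<in> {1..n-1}"
    have s: "2*k + (2*n-2*k) = 2*n" using k by auto
    show "bernoulli (2*k) * bernoulli_bar (2*n-2*k) / (real (2*k) * real (2*n-2*k))
            * (Gamma (real (2*k) + p) * Gamma (real (2*n-2*k) + p) / (Gamma (real (2*k)) * Gamma (real (2*n-2*k))))
          = G2 * (bb (2*k) * cc (2*n-2*k) * Beta (p + real (2*k)) (p + real (2*n-2*k)))"
      unfolding bernoulli_bb bernoulli_bar_cc G2_def
      using termL[of "2*k" "2*n-2*k" p "bb (2*k)" "cc (2*n-2*k)"] k p unfolding s by auto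
  qed simp
  have R1: "2 * Gamma (p + 1) * (\<Sum>k=1..n. bernoulli (2*k) * bernoulli (2*n-2*k) / (fact (2*k) * fact (2*n-2*k))
            * ((1 - 2 ^ (2*k-1)) / 2 ^ (2*n-1))
            * (Gamma (real (2*k) + p) * Gamma (real (2*n) + 2*p) / Gamma (2*p + real (2*k) + 1)))
      = G2 * (\<Sum>k=1..n. 2 * cc (2*k) * bb (2*n-2*k) / 2^(2*n-2*k) * Beta (p + 1) (p + real (2*k)))"
    unfolding sum_distrib_left
  proof (rule sum.cong)
    fix k assume k: "k \<in> {1..n}"
    show "2 * Gamma (p + 1) * (bernoulli (2*k) * bernoulli (2*n-2*k) / (fact (2*k) * fact (2*n-2*k))
            * ((1 - 2 ^ (2*k-1)) / 2 ^ (2*n-1))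
            * (Gamma (real (2*k) + p) * Gamma (real (2*n) + 2*p) / Gamma (2*p + real (2*k) + 1)))
          = G2 * (2 * cc (2*k) * bb (2*n-2*k) / 2^(2*n-2*k) * Beta (p + 1) (p + real (2*k)))"
      unfolding bernoulli_bb G2_def cc_def
      using termR[of k n p "bb (2*k)" "bb (2*n-2*k)"] k p by auto
  qed simp
  have R2: "bernoulli (2*n) * Gamma (real (2*n) + 2*p) / (fact (2*n) * 2 ^ (2*n-1))
            * (\<Sum>k=1..2*n-1. Beta (p + real k) (p + 1))
      = G2 * (2 * bb (2*n) / 2^(2*n) * (\<Sum>j=1..2*n-1. Beta (p + real j) (p + 1)))"
  proof -
    have n2: "2*n = Suc (2*n-1)" using n1 by simp
    have e: "(2::real)^(2*n) = 2 * 2^(2*n-1)" by (subst n2) (rule power_Suc)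
    show ?thesis unfolding bernoulli_bb G2_def e by simp
  qed
  show ?thesis
    unfolding L R1 R2 beta_identity[OF p n1] by (simp add: algebra_simps)
qed

end
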